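(* Assume (D1): there are $K:E\to(0,\infty)$ bounded on compact sets and $h:[0,\infty)\to[0,\infty)$ with $\int_0^\infty h(t)dt<\infty$ such that $\|P_t(x,\cdot)-\mu(\cdot)\|_{TV}<K(x)h(t)$ for all $x,t$; and (D2): $\mathbb E^x\{K(X_T)\}<\infty$ for all $x,T$. Suppose $\mu(f)<0$ and there is $\delta>0$ such that $L_\delta=\{x\in E: f(x)\le\mu(f)+\delta\}$ is compact. Let $q(x)=\limsup_{T\to\infty}\mathbb E^x\{\int_0^T(f(X_s)-\mu(f))ds\}$, $B_n=\{x\in E:\|x\|\le n\}$ and $\tau_{B_n}=\inf\{t\ge0:X_t\in B_n\}$. Then $\lim_{\|x\|\to\infty}q(x)=\infty$ if and only if $\lim_{\|x\|\to\infty}\mathbb E^x\{\tau_{B_n}\}=\infty$ for all $n$.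
   Context: $E$ is a locally compact separable metric space in which every closed ball is compact; $\|x\|$ denotes the distance of $x$ from a fixed reference point of $E$ (the paper writes it as a norm). $(X_t)$ is a right-continuous time-homogeneous (standard) Markov process on $E$ with laws $\mathbb P^x$, expectations $\mathbb E^x$, transition probabilities $P_t(x,\cdot)$, satisfying the weak Feller property $P_t\mathcal C_0\subseteq\mathcal C_0$ ($\mathcal C_0$ continuous bounded functions vanishing at infinity) and ergodicity (a unique probability measure $\mu$ with $\|P_t(x,\cdot)-\mu\|_{TV}\to0$ for all $x$); $\mu(f)=\int f\,d\mu$. $f$ is continuous and bounded. *)

theory Defs
  imports "HOL-Probability.Probability"
begin

definition tv_dist :: "'a::topological_space measure \<Rightarrow> 'a measure \<Rightarrow> real" where
  "tv_dist P Q = (SUP A\<in>sets (borel :: 'a measure). \<bar>measure P A - measure Q A\<bar>)"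

definition trans_prob :: "('a::topological_space \<Rightarrow> 'w measure) \<Rightarrow> (real \<Rightarrow> 'w \<Rightarrow> 'a) \<Rightarrow> real \<Rightarrow> 'a \<Rightarrow> 'a measure" where
  "trans_prob M X t x = distr (M x) borel (X t)"

definition at_infty_from :: "'a::metric_space \<Rightarrow> 'a filter" where
  "at_infty_from x0 = filtercomap (\<lambda>x. dist x0 x) at_top"

definition C0 :: "'a::metric_space \<Rightarrow> ('a \<Rightarrow> real) set" where
  "C0 x0 = {g. continuous_on UNIV g \<and> bounded (range g) \<and> (g \<longlongrightarrow> 0) (at_infty_from x0)}"

text \<open>Hitting time inf{t >= 0 : X_t in B}, valued in [0,\<infinity>] (inf of the empty set = \<infinity>).\<close>
definition hitting_time :: "(real \<Rightarrow> 'w \<Rightarrow> 'a) \<Rightarrow> 'a set \<Rightarrow> 'w \<Rightarrow> ennreal" where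
  "hitting_time X B \<omega> = (INF t\<in>{t. 0 \<le> t \<and> X t \<omega> \<in> B}. ennreal t)"

definition is_stopping_time :: "(real \<Rightarrow> 'w measure) \<Rightarrow> ('w \<Rightarrow> ennreal) \<Rightarrow> bool" where
  "is_stopping_time F \<tau> \<longleftrightarrow>
     (\<forall>t\<ge>0. {\<omega>\<in>space (F t). \<tau> \<omega> \<le> ennreal t} \<in> sets (F t))"

definition stopped_sets :: "'w measure \<Rightarrow> (real \<Rightarrow> 'w measure) \<Rightarrow> ('w \<Rightarrow> ennreal) \<Rightarrow> 'w set set" where
  "stopped_sets M0 F \<tau> =
     {A \<in> sets M0. \<forall>t\<ge>0. A \<inter> {\<omega>\<in>space M0. \<tau> \<omega> \<le> ennreal t} \<in> sets (F t)}"

text \<open>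
  A right-continuous time-homogeneous standard Markov process on E (realised on a measurable
  space of sample points 'w, with laws M x = P^x and filtration F):
  each P^x is a probability measure on a common measurable space; X_t is F_t-adapted;
  F is a right-continuous filtration; P^x(X_0 = x) = 1; all paths are right-continuous with
  left limits; x \<mapsto> P^x(X_t \<in> A) is Borel measurable; hitting times of Borel sets are
  F-stopping times; the strong Markov property holds at F-stopping times; and the process is
  quasi-left-continuous.\<close>
definition standard_markov ::
  "('a::{metric_space, second_countable_topology} \<Rightarrow> 'w measure) \<Rightarrow> (real \<Rightarrow> 'w measure) \<Rightarrow> (real \<Rightarrow> 'w \<Rightarrow> 'a) \<Rightarrow> bool" where
  "standard_markov M F X \<longleftrightarrow>
     (\<forall>x. prob_space (M x)) \<and>
     (\<forall>x y. sets (M x) = sets (M y)) \<and>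
     (\<forall>x t. 0 \<le> t \<longrightarrow> subalgebra (M x) (F t)) \<and>
     (\<forall>s t. 0 \<le> s \<longrightarrow> s \<le> t \<longrightarrow> sets (F s) \<subseteq> sets (F t)) \<and>
     (\<forall>t. 0 \<le> t \<longrightarrow> sets (F t) = (\<Inter>s\<in>{t<..}. sets (F s))) \<and>
     (\<forall>t. 0 \<le> t \<longrightarrow> X t \<in> measurable (F t) borel) \<and>
     (\<forall>x. AE \<omega> in M x. X 0 \<omega> = x) \<and>
     (\<forall>x. \<forall>\<omega>\<in>space (M x). \<forall>t\<ge>0. continuous (at_right t) (\<lambda>s. X s \<omega>)) \<and>
     (\<forall>x. \<forall>\<omega>\<in>space (M x). \<forall>t>0. \<exists>l. ((\<lambda>s. X s \<omega>) \<longlongrightarrow> l) (at_left t)) \<and>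
     (\<forall>t A. 0 \<le> t \<longrightarrow> A \<in> sets borel \<longrightarrow>
        (\<lambda>x. measure (M x) {\<omega>\<in>space (M x). X t \<omega> \<in> A}) \<in> borel_measurable borel) \<and>
     (\<forall>B. B \<in> sets borel \<longrightarrow> is_stopping_time F (hitting_time X B)) \<and>
     (\<forall>\<tau> x s A (g :: 'a \<Rightarrow> real). is_stopping_time F \<tau> \<longrightarrow> 0 \<le> s \<longrightarrow>
        A \<in> stopped_sets (M x) F \<tau> \<longrightarrow> g \<in> borel_measurable borel \<longrightarrow> bounded (range g) \<longrightarrow>
        (\<integral>\<omega>. indicator (A \<inter> {\<omega>. \<tau> \<omega> < \<infinity>}) \<omega> * g (X (enn2real (\<tau> \<omega>) + s) \<omega>) \<partial>M x) =
        (\<integral>\<omega>. indicator (A \<inter> {\<omega>. \<tau> \<omega> < \<infinity>}) \<omega> *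
               (\<integral>\<omega>'. g (X s \<omega>') \<partial>M (X (enn2real (\<tau> \<omega>)) \<omega>)) \<partial>M x)) \<and>
     (\<forall>\<sigma> \<tau> x. (\<forall>n. is_stopping_time F (\<sigma> n)) \<longrightarrow> is_stopping_time F \<tau> \<longrightarrow>
        (\<forall>\<omega>\<in>space (M x). incseq (\<lambda>n. \<sigma> n \<omega>) \<and> (\<lambda>n. \<sigma> n \<omega>) \<longlonglongrightarrow> \<tau> \<omega>) \<longrightarrow>
        (AE \<omega> in M x. \<tau> \<omega> < \<infinity> \<longrightarrow>
           (\<lambda>n. X (enn2real (\<sigma> n \<omega>)) \<omega>) \<longlonglongrightarrow> X (enn2real (\<tau> \<omega>)) \<omega>))"

definition weak_feller :: "'a::metric_space \<Rightarrow> ('a \<Rightarrow> 'w measure) \<Rightarrow> (real \<Rightarrow> 'w \<Rightarrow> 'a) \<Rightarrow> bool" where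
  "weak_feller x0 M X \<longleftrightarrow>
     (\<forall>t g. 0 \<le> t \<longrightarrow> g \<in> C0 x0 \<longrightarrow> (\<lambda>x. \<integral>\<omega>. g (X t \<omega>) \<partial>M x) \<in> C0 x0)"

definition ergodic_with :: "('a::topological_space \<Rightarrow> 'w measure) \<Rightarrow> (real \<Rightarrow> 'w \<Rightarrow> 'a) \<Rightarrow> 'a measure \<Rightarrow> bool" where
  "ergodic_with M X \<mu> \<longleftrightarrow>
     prob_space \<mu> \<and> sets \<mu> = sets borel \<and>
     (\<forall>x. ((\<lambda>t. tv_dist (trans_prob M X t x) \<mu>) \<longlongrightarrow> 0) at_top) \<and>
     (\<forall>\<nu>. prob_space \<nu> \<and> sets \<nu> = sets borel \<and>
          (\<forall>x. ((\<lambda>t. tv_dist (trans_prob M X t x) \<nu>) \<longlongrightarrow> 0) at_top) \<longrightarrow> \<nu> = \<mu>)"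

end

theory Submission
  imports Defs
begin


lemma tv_ge:
  fixes P Q :: "'a::topological_space measure"
  assumes "prob_space P" "prob_space Q" "A \<in> sets borel"
  shows "\<bar>measure P A - measure Q A\<bar> \<le> tv_dist P Q"
  unfolding tv_dist_def
proof (rule cSUP_upper[OF assms(3)])
  show "bdd_above ((\<lambda>A. \<bar>measure P A - measure Q A\<bar>) ` sets borel)"
  proof (rule bdd_aboveI[of _ 1], clarify)
    fix B
    have "measure P B \<le> 1" "measure Q B \<le> 1"
      using prob_space.prob_le_1[OF assms(1)] prob_space.prob_le_1[OF assms(2)] by auto
    then show "\<bar>measure P B - measure Q B\<bar> \<le> 1" using measure_nonneg[of P B] measure_nonneg[of Q B] by linarith
  qed
qed

lemma layer:
  fixes P :: "'a::topological_space measure" and g :: "'a \<Rightarrow> real"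
  assumes P: "prob_space P" "sets P = sets borel" and g[measurable]: "g \<in> borel_measurable borel"
    and gb: "\<And>y. 0 \<le> g y" "\<And>y. g y \<le> c"
  shows "(\<integral>y. g y \<partial>P) = (\<integral>t. (if 0 \<le> t then measure P {y. t < g y} else 0) \<partial>lborel)"
    and "integrable lborel (\<lambda>t. (if 0 \<le> t then measure P {y. t < g y} else 0))"
proof -
  interpret P: prob_space P by fact
  have [measurable_cong]: "sets P = sets borel" by fact
  have sp: "space P = UNIV" using sets_eq_imp_space_eq[OF P(2)] by simp
  interpret pair_sigma_finite P lborel
    by (simp add: pair_sigma_finite_def P.sigma_finite_measure_axioms lborel.sigma_finite_measure_axioms)
  define F where "F = (\<lambda>(y,t). if 0 \<le> t \<and> t < g y then 1 else (0::real))"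
  have Fm[measurable]: "F \<in> borel_measurable (P \<Otimes>\<^sub>M lborel)"
    unfolding F_def by measurable
  have c0: "0 \<le> c" using gb[of undefined] by linarith
  have intF: "integrable (P \<Otimes>\<^sub>M lborel) F"
  proof (rule Bochner_Integration.integrable_bound)
    show "integrable (P \<Otimes>\<^sub>M lborel) (indicator (space P \<times> {0..c}) :: _ \<Rightarrow> real)"
    proof (rule integrable_real_indicator)
      have "emeasure (P \<Otimes>\<^sub>M lborel) (space P \<times> {0..c}) = emeasure P (space P) * emeasure lborel {0..c}"
        by (rule lborel.emeasure_pair_measure_Times) auto
      then show "emeasure (P \<Otimes>\<^sub>M lborel) (space P \<times> {0..c}) < \<infinity>"
        using c0 by (simp add: P.emeasure_space_1)
    qed auto
    show "AE x in P \<Otimes>\<^sub>M lborel. norm (F x) \<le> norm (indicator (space P \<times> {0..c}) x :: real)"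
      using gb by (intro AE_I2) (auto simp: F_def sp indicator_def space_pair_measure split: if_splits, meson gb(2) less_imp_le order.trans)
  qed (fact Fm)
  have intF': "integrable (P \<Otimes>\<^sub>M lborel) (case_prod (\<lambda>y t. F (y,t)))"
    using intF by simp
  have in1: "(\<integral>t. F (y,t) \<partial>lborel) = g y" for y
  proof -
    have "(\<integral>t. F (y,t) \<partial>lborel) = (\<integral>t. indicator {0..<g y} t \<partial>lborel)"
      by (rule Bochner_Integration.integral_cong) (auto simp: F_def indicator_def)
    also have "\<dots> = g y" using gb[of y] by simp
    finally show ?thesis .
  qed
  have in2: "(\<integral>y. F (y,t) \<partial>P) = (if 0 \<le> t then measure P {y. t < g y} else 0)" for t
  proof -
    have "(\<integral>y. F (y,t) \<partial>P) = (\<integral>y. (if 0 \<le> t then indicator {y. t < g y} y else 0) \<partial>P)"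
      by (rule Bochner_Integration.integral_cong) (auto simp: F_def indicator_def)
    also have "\<dots> = (if 0 \<le> t then measure P {y. t < g y} else 0)" by (simp add: sp)
    finally show ?thesis .
  qed
  show "(\<integral>y. g y \<partial>P) = (\<integral>t. (if 0 \<le> t then measure P {y. t < g y} else 0) \<partial>lborel)"
    using Fubini_integral[OF intF'] by (simp add: in1 in2)
  show "integrable lborel (\<lambda>t. (if 0 \<le> t then measure P {y. t < g y} else 0))"
    using integrable_snd[OF intF'] by (simp add: in2)
qed

lemma tv_integral:
  fixes P Q :: "'a::topological_space measure" and f :: "'a \<Rightarrow> real"
  assumes P: "prob_space P" "sets P = sets borel" and Q: "prob_space Q" "sets Q = sets borel"
    and f[measurable]: "f \<in> borel_measurable borel" and fb: "\<And>y. \<bar>f y\<bar> \<le> c"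
  shows "\<bar>(\<integral>y. f y \<partial>P) - (\<integral>y. f y \<partial>Q)\<bar> \<le> 2 * c * tv_dist P Q"
proof -
  interpret P: prob_space P by fact
  interpret Q: prob_space Q by fact
  have [measurable_cong]: "sets P = sets borel" "sets Q = sets borel" using P Q by auto
  define g where "g y = f y + c" for y
  have gm[measurable]: "g \<in> borel_measurable borel" unfolding g_def by measurable
  have g0: "0 \<le> g y" and g2: "g y \<le> 2*c" for y using fb[of y] by (auto simp: g_def abs_le_iff)
  have c0: "0 \<le> c" using fb[of undefined] by linarith
  have fi: "integrable P f" "integrable Q f"
    using fb by (auto intro!: P.integrable_const_bound[where B=c] Q.integrable_const_bound[where B=c])
  have "(\<integral>y. g y \<partial>P) = (\<integral>y. f y \<partial>P) + c" "(\<integral>y. g y \<partial>Q) = (\<integral>y. f y \<partial>Q) + c"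
    using fi unfolding g_def by (simp_all add: P.prob_space Q.prob_space)
  then have eq: "(\<integral>y. f y \<partial>P) - (\<integral>y. f y \<partial>Q) = (\<integral>y. g y \<partial>P) - (\<integral>y. g y \<partial>Q)" by simp
  define IP where "IP t = (if 0 \<le> t then measure P {y. t < g y} else 0)" for t
  define IQ where "IQ t = (if 0 \<le> t then measure Q {y. t < g y} else 0)" for t
  note LP = layer[OF P gm g0 g2] and LQ = layer[OF Q gm g0 g2]
  have "(\<integral>y. g y \<partial>P) - (\<integral>y. g y \<partial>Q) = (\<integral>t. IP t - IQ t \<partial>lborel)"
    using LP LQ unfolding IP_def IQ_def by (simp add: Bochner_Integration.integral_diff)
  also have "\<bar>\<dots>\<bar> \<le> (\<integral>t. indicator {0..2*c} t * tv_dist P Q \<partial>lborel)"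
  proof (rule integral_abs_bound_integral)
    show "integrable lborel (\<lambda>t. IP t - IQ t)" using LP LQ unfolding IP_def IQ_def by auto
    show "integrable lborel (\<lambda>t. indicator {0..2*c} t * tv_dist P Q)"
      by (intro integrable_mult_left integrable_real_indicator) (auto simp: emeasure_lborel_Icc_eq)
    fix t
    show "\<bar>IP t - IQ t\<bar> \<le> indicator {0..2 * c} t * tv_dist P Q"
    proof (cases "0 \<le> t \<and> t \<le> 2*c")
      case True
      have "{y. t < g y} \<in> sets borel" by measurable
      then show ?thesis using True tv_ge[OF P(1) Q(1)] by (auto simp: IP_def IQ_def)
    next
      case False
      have "{y. t < g y} = {}" if "2*c < t" using g2 that by (smt (verit) Collect_empty_eq)
      with False show ?thesis by (auto simp: IP_def IQ_def)
    qed
  qed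
  also have "\<dots> = 2*c * tv_dist P Q" using c0 by simp
  finally show ?thesis using eq by simp
qed


lemma markovD:
  fixes X :: "real \<Rightarrow> 'w \<Rightarrow> 'a::{metric_space, second_countable_topology}" and g :: "'a \<Rightarrow> real"
  assumes "standard_markov M F X"
  shows markov_prob: "prob_space (M x)"
    and markov_sets: "sets (M x) = sets (M y)"
    and markov_sub: "0 \<le> t \<Longrightarrow> subalgebra (M x) (F t)"
    and markov_mono: "0 \<le> s \<Longrightarrow> s \<le> t \<Longrightarrow> sets (F s) \<subseteq> sets (F t)"
    and markov_Xm: "0 \<le> t \<Longrightarrow> X t \<in> measurable (F t) borel"
    and markov_rc: "\<omega> \<in> space (M x) \<Longrightarrow> 0 \<le> t \<Longrightarrow> continuous (at_right t) (\<lambda>s. X s \<omega>)"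
    and markov_kernel: "0 \<le> t \<Longrightarrow> A \<in> sets borel \<Longrightarrow>
        (\<lambda>x. measure (M x) {\<omega>\<in>space (M x). X t \<omega> \<in> A}) \<in> borel_measurable borel"
    and markov_hit: "B \<in> sets borel \<Longrightarrow> is_stopping_time F (hitting_time X B)"
    and markov_SM: "is_stopping_time F \<tau> \<Longrightarrow> 0 \<le> s \<Longrightarrow>
        A' \<in> stopped_sets (M x) F \<tau> \<Longrightarrow> g \<in> borel_measurable borel \<Longrightarrow> bounded (range g) \<Longrightarrow>
        (\<integral>\<omega>. indicator (A' \<inter> {\<omega>. \<tau> \<omega> < \<infinity>}) \<omega> * g (X (enn2real (\<tau> \<omega>) + s) \<omega>) \<partial>M x) =
        (\<integral>\<omega>. indicator (A' \<inter> {\<omega>. \<tau> \<omega> < \<infinity>}) \<omega> *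
               (\<integral>\<omega>'. g (X s \<omega>') \<partial>M (X (enn2real (\<tau> \<omega>)) \<omega>)) \<partial>M x)"
proof -
  note D = assms[unfolded standard_markov_def]
  have c1: "\<forall>x. prob_space (M x)" using D by (elim conjE) assumption
  have c2: "\<forall>x y. sets (M x) = sets (M y)" using D by (elim conjE) assumption
  have c3: "\<forall>x t. 0 \<le> t \<longrightarrow> subalgebra (M x) (F t)" using D by (elim conjE) assumption
  have c4: "\<forall>s t. 0 \<le> s \<longrightarrow> s \<le> t \<longrightarrow> sets (F s) \<subseteq> sets (F t)" using D by (elim conjE) assumption
  have c6: "\<forall>t. 0 \<le> t \<longrightarrow> X t \<in> measurable (F t) borel" using D by (elim conjE) assumption
  have c8: "\<forall>x. \<forall>\<omega>\<in>space (M x). \<forall>t\<ge>0. continuous (at_right t) (\<lambda>s. X s \<omega>)" using D by (elim conjE) assumption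
  have c10: "\<forall>t A. 0 \<le> t \<longrightarrow> A \<in> sets borel \<longrightarrow>
        (\<lambda>x. measure (M x) {\<omega>\<in>space (M x). X t \<omega> \<in> A}) \<in> borel_measurable borel" using D by (elim conjE) assumption
  have c11: "\<forall>B. B \<in> sets borel \<longrightarrow> is_stopping_time F (hitting_time X B)" using D by (elim conjE) assumption
  have c12: "\<forall>\<tau> x s A (g :: 'a \<Rightarrow> real). is_stopping_time F \<tau> \<longrightarrow> 0 \<le> s \<longrightarrow>
        A \<in> stopped_sets (M x) F \<tau> \<longrightarrow> g \<in> borel_measurable borel \<longrightarrow> bounded (range g) \<longrightarrow>
        (\<integral>\<omega>. indicator (A \<inter> {\<omega>. \<tau> \<omega> < \<infinity>}) \<omega> * g (X (enn2real (\<tau> \<omega>) + s) \<omega>) \<partial>M x) =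
        (\<integral>\<omega>. indicator (A \<inter> {\<omega>. \<tau> \<omega> < \<infinity>}) \<omega> *
               (\<integral>\<omega>'. g (X s \<omega>') \<partial>M (X (enn2real (\<tau> \<omega>)) \<omega>)) \<partial>M x)" using D by (elim conjE) assumption
  show "prob_space (M x)" using c1 by simp
  show "sets (M x) = sets (M y)" using c2 by simp
  show "0 \<le> t \<Longrightarrow> subalgebra (M x) (F t)" using c3 by simp
  show "0 \<le> s \<Longrightarrow> s \<le> t \<Longrightarrow> sets (F s) \<subseteq> sets (F t)" using c4 by simp
  show "0 \<le> t \<Longrightarrow> X t \<in> measurable (F t) borel" using c6 by simp
  show "\<omega> \<in> space (M x) \<Longrightarrow> 0 \<le> t \<Longrightarrow> continuous (at_right t) (\<lambda>s. X s \<omega>)" using c8 by simp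
  show "0 \<le> t \<Longrightarrow> A \<in> sets borel \<Longrightarrow>
        (\<lambda>x. measure (M x) {\<omega>\<in>space (M x). X t \<omega> \<in> A}) \<in> borel_measurable borel" using c10 by simp
  show "B \<in> sets borel \<Longrightarrow> is_stopping_time F (hitting_time X B)" using c11 by simp
  show "is_stopping_time F \<tau> \<Longrightarrow> 0 \<le> s \<Longrightarrow>
        A' \<in> stopped_sets (M x) F \<tau> \<Longrightarrow> g \<in> borel_measurable borel \<Longrightarrow> bounded (range g) \<Longrightarrow>
        (\<integral>\<omega>. indicator (A' \<inter> {\<omega>. \<tau> \<omega> < \<infinity>}) \<omega> * g (X (enn2real (\<tau> \<omega>) + s) \<omega>) \<partial>M x) =
        (\<integral>\<omega>. indicator (A' \<inter> {\<omega>. \<tau> \<omega> < \<infinity>}) \<omega> *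
               (\<integral>\<omega>'. g (X s \<omega>') \<partial>M (X (enn2real (\<tau> \<omega>)) \<omega>)) \<partial>M x)"
    using c12 by blast
qed

lemma markov_Xm':
  fixes X :: "real \<Rightarrow> 'w \<Rightarrow> 'a::{metric_space, second_countable_topology}"
  assumes "standard_markov M F X" "0 \<le> t"
  shows "X t \<in> borel_measurable (M x)"
  by (rule measurable_from_subalg[of "M x" "F t" "X t" borel]) (use markov_sub[of M F X t x] markov_Xm[of M F X t] assms in auto)

lemma joint_meas:
  fixes X :: "real \<Rightarrow> 'w \<Rightarrow> 'a::{metric_space, second_countable_topology}"
  assumes mk: "standard_markov M F X"
  shows "(\<lambda>p. X (max 0 (snd p)) (fst p)) \<in> borel_measurable (M x \<Otimes>\<^sub>M (lborel :: real measure))"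
proof -
  define d where "d k s = (real (nat \<lfloor>2^k * max 0 s\<rfloor>) + 1) / 2^k" for k :: nat and s :: real
  have Ym: "(\<lambda>p. X (d k (snd p)) (fst p)) \<in> borel_measurable (M x \<Otimes>\<^sub>M (lborel :: real measure))" for k
  proof -
    have "(\<lambda>p. (\<lambda>i. X ((real i + 1) / 2^k) (fst p)) (nat \<lfloor>2^k * max 0 (snd p)\<rfloor>)) \<in> borel_measurable (M x \<Otimes>\<^sub>M (lborel :: real measure))"
    proof (rule measurable_compose_countable[where f="\<lambda>i p. X ((real i + 1) / 2^k) (fst p)"])
      fix i :: nat
      show "(\<lambda>p. X ((real i + 1) / 2^k) (fst p)) \<in> borel_measurable (M x \<Otimes>\<^sub>M (lborel :: real measure))"
        by (rule measurable_compose[OF measurable_fst markov_Xm'[OF mk]]) simp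
    next
      show "(\<lambda>p. nat \<lfloor>2^k * max 0 (snd p)\<rfloor>) \<in> M x \<Otimes>\<^sub>M (lborel :: real measure) \<rightarrow>\<^sub>M count_space UNIV"
        by (rule measurable_compose[of _ _ "count_space UNIV" nat] measurable_compose[OF _ measurable_real_floor])+ (auto intro: measurable_count_space)
    qed
    then show ?thesis by (simp add: d_def)
  qed
  show ?thesis
  proof (rule borel_measurable_LIMSEQ_metric[OF Ym])
    fix p assume p: "p \<in> space (M x \<Otimes>\<^sub>M (lborel :: real measure))"
    then have om: "fst p \<in> space (M x)" by (auto simp: space_pair_measure)
    define s where "s = max 0 (snd p)"
    have s0: "0 \<le> s" by (simp add: s_def)
    have dl: "s < d k s" "d k s \<le> s + 1 / 2^k" for k
    proof -
      have fl: "real_of_int \<lfloor>2^k * s\<rfloor> \<le> 2^k * s" "2^k * s < real_of_int \<lfloor>2^k * s\<rfloor> + 1"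
        by linarith+
      have nn: "real (nat \<lfloor>2^k * s\<rfloor>) = real_of_int \<lfloor>2^k * s\<rfloor>" using s0 by simp
      have ds: "d k s = (real (nat \<lfloor>2^k * s\<rfloor>) + 1) / 2^k" using s0 by (simp add: d_def)
      have "2^k * s < real (nat \<lfloor>2^k * s\<rfloor>) + 1" using fl nn by simp
      then show "s < d k s" unfolding ds by (simp add: field_simps)
      have "real (nat \<lfloor>2^k * s\<rfloor>) + 1 \<le> 2^k * s + 1" using fl nn by simp
      then show "d k s \<le> s + 1 / 2^k" unfolding ds by (simp add: field_simps)
    qed
    have "(\<lambda>k. d k s) \<longlonglongrightarrow> s"
    proof (rule tendsto_sandwich[of "\<lambda>k. s" _ _ "\<lambda>k. s + 1 / 2^k"])
      show "\<forall>\<^sub>F k in sequentially. s \<le> d k s" by (rule always_eventually) (simp add: less_imp_le[OF dl(1)])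
      show "\<forall>\<^sub>F k in sequentially. d k s \<le> s + 1 / 2 ^ k" using dl(2) by auto
      have "(\<lambda>k. s + (1/2) ^ k) \<longlonglongrightarrow> s + 0"
        by (intro tendsto_add tendsto_const LIMSEQ_power_zero) auto
      then show "(\<lambda>k. s + 1 / 2 ^ k) \<longlonglongrightarrow> s" by (simp add: power_one_over)
    qed simp
    then have "filterlim (\<lambda>k. d k s) (at_right s) sequentially"
      unfolding filterlim_at using dl(1) by (auto intro!: always_eventually simp: less_imp_neq[OF dl(1)] less_imp_neq[OF dl(1), symmetric])
    moreover have "((\<lambda>t. X t (fst p)) \<longlongrightarrow> X s (fst p)) (at_right s)"
      using markov_rc[OF mk om s0] by (simp add: continuous_within)
    moreover have "d k (snd p) = d k s" for k by (simp add: d_def s_def)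
    ultimately show "(\<lambda>k. X (d k (snd p)) (fst p)) \<longlonglongrightarrow> X (max 0 (snd p)) (fst p)"
      unfolding s_def[symmetric] apply (simp only:) by (rule filterlim_compose[of "\<lambda>t. X t (fst p)" _ "at_right s"]) assumption+
  qed
qed



context
  fixes M :: "'a::{metric_space, second_countable_topology} \<Rightarrow> 'w measure"
    and F :: "real \<Rightarrow> 'w measure"
    and X :: "real \<Rightarrow> 'w \<Rightarrow> 'a"
  assumes mk: "standard_markov M F X"
begin

lemma space_F: "0 \<le> t \<Longrightarrow> space (F t) = space (M x)"
  using markov_sub[OF mk] unfolding subalgebra_def by blast

lemma sets_F: "0 \<le> t \<Longrightarrow> sets (F t) \<subseteq> sets (M x)"
  using markov_sub[OF mk] unfolding subalgebra_def by blast

lemma hit_le: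
  assumes "0 \<le> s" "X s \<omega> \<in> B"
  shows "hitting_time X B \<omega> \<le> ennreal s"
  unfolding hitting_time_def using assms by (intro INF_lower) auto

lemma hit_in:
  assumes om: "\<omega> \<in> space (M x)" and B: "closed B" and fin: "hitting_time X B \<omega> < \<infinity>"
  shows "X (enn2real (hitting_time X B \<omega>)) \<omega> \<in> B"
proof -
  define S where "S = {t. 0 \<le> t \<and> X t \<omega> \<in> B}"
  define r where "r = enn2real (hitting_time X B \<omega>)"
  have r0: "0 \<le> r" by (simp add: r_def)
  have tr: "hitting_time X B \<omega> = ennreal r" using fin by (simp add: r_def ennreal_enn2real_if)
  have lb: "r \<le> t" if "t \<in> S" for t
  proof -
    have "ennreal r \<le> ennreal t" using hit_le[of t \<omega> B] that tr by (auto simp: S_def)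
    then show ?thesis using that by (auto simp: S_def ennreal_le_iff)
  qed
  show ?thesis
  proof (cases "r \<in> S")
    case True then show ?thesis by (simp add: S_def r_def)
  next
    case False
    have ex: "\<exists>t\<in>S. t < r + 1 / (real k + 1)" for k :: nat
    proof -
      have "(INF t\<in>S. ennreal t) < ennreal r + ennreal (1 / (real k + 1))"
        using tr by (simp add: hitting_time_def S_def[symmetric] ennreal_zero_less_divide)
      then have "(INF t\<in>S. ennreal t) < ennreal (r + 1 / (real k + 1))"
        using r0 by (simp add: ennreal_plus[symmetric] del: ennreal_plus)
      then obtain t where t: "t \<in> S" "ennreal t < ennreal (r + 1 / (real k + 1))"
        by (auto simp: INF_less_iff)
      then have "t < r + 1 / (real k + 1)" using r0 by (subst (asm) ennreal_less_iff) (auto simp: S_def)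
      then show ?thesis using t by blast
    qed
    then obtain tk where tk: "\<And>k. tk k \<in> S" "\<And>k. tk k < r + 1 / (real k + 1)" by metis
    have gt: "r < tk k" for k using lb[OF tk(1)[of k]] False tk(1)[of k] by (cases "r = tk k") auto
    have "tk \<longlonglongrightarrow> r"
    proof (rule tendsto_sandwich[of "\<lambda>k. r" _ _ "\<lambda>k. r + 1 / (real k + 1)"])
      show "\<forall>\<^sub>F k in sequentially. r \<le> tk k" by (rule always_eventually) (simp add: less_imp_le[OF gt])
      show "\<forall>\<^sub>F k in sequentially. tk k \<le> r + 1 / (real k + 1)" by (rule always_eventually) (simp add: less_imp_le[OF tk(2)])
      have "(\<lambda>k. r + 1 / (real k + 1)) = (\<lambda>n. r + inverse (real (Suc n)))"
        by (simp add: inverse_eq_divide add.commute)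
      then show "(\<lambda>k. r + 1 / (real k + 1)) \<longlonglongrightarrow> r" using LIMSEQ_inverse_real_of_nat_add by simp
    qed simp
    then have "filterlim tk (at_right r) sequentially"
      unfolding filterlim_at using gt by (auto intro!: always_eventually simp: less_imp_neq[OF gt, symmetric])
    moreover have "((\<lambda>t. X t \<omega>) \<longlongrightarrow> X r \<omega>) (at_right r)"
      using markov_rc[OF mk om r0] by (simp add: continuous_within)
    ultimately have "(\<lambda>k. X (tk k) \<omega>) \<longlonglongrightarrow> X r \<omega>"
      by (rule filterlim_compose[of "\<lambda>t. X t \<omega>" "nhds (X r \<omega>)" "at_right r" tk sequentially, rotated])
    moreover have "X (tk k) \<omega> \<in> B" for k using tk(1)[of k] by (simp add: S_def)
    ultimately have "X r \<omega> \<in> B" using closed_sequentially[OF B, of "\<lambda>k. X (tk k) \<omega>"] by simp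
    then show ?thesis by (simp add: r_def)
  qed
qed

lemma stop_meas:
  assumes st: "is_stopping_time F \<tau>"
  shows "\<tau> \<in> borel_measurable (M x)"
proof (rule borel_measurableI_le)
  fix y :: ennreal
  show "{\<omega> \<in> space (M x). \<tau> \<omega> \<le> y} \<in> sets (M x)"
  proof (cases "y = \<infinity>")
    case True then show ?thesis by simp
  next
    case False
    define r where "r = enn2real y"
    have r0: "0 \<le> r" by (simp add: r_def)
    have y: "y = ennreal r" using False by (simp add: r_def ennreal_enn2real_if)
    have "{\<omega> \<in> space (F r). \<tau> \<omega> \<le> ennreal r} \<in> sets (F r)" using st r0 by (auto simp: is_stopping_time_def)
    then show ?thesis using sets_F[OF r0, of x] space_F[OF r0, of x] y by auto
  qed
qed

lemma stopped_le:
  assumes st: "is_stopping_time F \<tau>" and c0: "0 \<le> c"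
  shows "{\<omega> \<in> space (M x). \<tau> \<omega> \<le> ennreal c} \<in> stopped_sets (M x) F \<tau>"
  unfolding stopped_sets_def
proof (intro CollectI conjI allI impI)
  show "{\<omega> \<in> space (M x). \<tau> \<omega> \<le> ennreal c} \<in> sets (M x)"
    using stop_meas[OF st, of x] by measurable
  fix t :: real assume t0: "0 \<le> t"
  have eq: "{\<omega> \<in> space (M x). \<tau> \<omega> \<le> ennreal c} \<inter> {\<omega> \<in> space (M x). \<tau> \<omega> \<le> ennreal t}
      = {\<omega> \<in> space (F (min c t)). \<tau> \<omega> \<le> ennreal (min c t)}"
    using space_F[of "min c t" x] c0 t0
    by (auto simp: min_def intro: order.trans[OF _ ennreal_leI])
  have "{\<omega> \<in> space (F (min c t)). \<tau> \<omega> \<le> ennreal (min c t)} \<in> sets (F (min c t))"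
    using st c0 t0 by (auto simp: is_stopping_time_def)
  also have "\<dots> \<subseteq> sets (F t)" using markov_mono[OF mk, of "min c t" t] c0 t0 by auto
  finally show "{\<omega> \<in> space (M x). \<tau> \<omega> \<le> ennreal c} \<inter> {\<omega> \<in> space (M x). \<tau> \<omega> \<le> ennreal t} \<in> sets (F t)"
    using eq by simp
qed

lemma kernel_meas:
  fixes g :: "'a \<Rightarrow> real"
  assumes u0: "0 \<le> u" and g[measurable]: "g \<in> borel_measurable (borel :: 'a measure)"
  shows "(\<lambda>y. \<integral>\<omega>. g (X u \<omega>) \<partial>M y) \<in> borel_measurable borel"
proof -
  define K where "K y = distr (M y) borel (X u)" for y
  have Xm: "X u \<in> measurable (M y) borel" for y using markov_Xm'[OF mk u0] .
  have Km: "K \<in> measurable borel (subprob_algebra borel)"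
  proof (rule measurable_subprob_algebra)
    fix y
    show "subprob_space (K y)" unfolding K_def
      using prob_space.prob_space_distr[OF markov_prob[OF mk] Xm] prob_space_imp_subprob_space by blast
    show "sets (K y) = sets borel" by (simp add: K_def)
  next
    fix A :: "'a set" assume A: "A \<in> sets borel"
    have "(\<lambda>y. emeasure (K y) A) = (\<lambda>y. ennreal (measure (M y) {\<omega>\<in>space (M y). X u \<omega> \<in> A}))"
    proof
      fix y
      interpret prob_space "M y" using markov_prob[OF mk] .
      have "emeasure (K y) A = emeasure (M y) (X u -` A \<inter> space (M y))"
        unfolding K_def using A Xm by (simp add: emeasure_distr)
      also have "\<dots> = ennreal (measure (M y) {\<omega>\<in>space (M y). X u \<omega> \<in> A})"
        by (simp add: emeasure_eq_measure vimage_def Int_def conj_commute)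
      finally show "emeasure (K y) A = ennreal (measure (M y) {\<omega>\<in>space (M y). X u \<omega> \<in> A})" .
    qed
    then show "(\<lambda>y. emeasure (K y) A) \<in> borel_measurable borel"
      using markov_kernel[OF mk u0 A] by simp
  qed
  have im: "(\<lambda>N. integral\<^sup>L N g) \<in> borel_measurable (subprob_algebra borel)"
    by (rule integral_measurable_subprob_algebra) (rule g)
  have "(\<lambda>y. integral\<^sup>L (K y) g) \<in> borel_measurable borel"
    using measurable_compose[OF Km im] .
  moreover have "integral\<^sup>L (K y) g = (\<integral>\<omega>. g (X u \<omega>) \<partial>M y)" for y
    unfolding K_def by (rule integral_distr[OF Xm g])
  ultimately show ?thesis by simp
qed

end


lemma set_integrable_bdd:
  fixes \<phi> :: "real \<Rightarrow> real"
  assumes [measurable]: "\<phi> \<in> borel_measurable borel" and b: "\<And>s. \<bar>\<phi> s\<bar> \<le> C"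
    and A[measurable]: "A \<in> sets borel" and fin: "emeasure lborel A < \<infinity>"
  shows "set_integrable lborel A \<phi>"
  unfolding set_integrable_def
proof (rule Bochner_Integration.integrable_bound[of lborel "\<lambda>s. C * indicator A s"])
  show "integrable lborel (\<lambda>s. C * indicator A s)"
    using fin by (intro integrable_mult_right integrable_real_indicator) auto
  show "AE s in lborel. norm (indicator A s *\<^sub>R \<phi> s) \<le> norm (C * indicator A s)"
  proof (intro AE_I2)
    fix s show "norm (indicator A s *\<^sub>R \<phi> s) \<le> norm (C * indicator A s)"
      using b[of s] by (cases "s \<in> A") auto
  qed
qed simp

lemma split_path:
  fixes \<phi> :: "real \<Rightarrow> real"
  assumes [measurable]: "\<phi> \<in> borel_measurable borel" and b: "\<And>s. \<bar>\<phi> s\<bar> \<le> C"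
    and t: "0 \<le> t" "t \<le> T"
  shows "(\<integral>s\<in>{0..T}. \<phi> s \<partial>lborel) = (\<integral>s\<in>{0..<t}. \<phi> s \<partial>lborel) + (\<integral>u. indicator {0..T-t} u * \<phi> (t+u) \<partial>lborel)"
proof -
  have un: "{0..T} = {0..<t} \<union> {t..T}" using t by auto
  have "(\<integral>s\<in>{0..T}. \<phi> s \<partial>lborel) = (\<integral>s\<in>{0..<t}. \<phi> s \<partial>lborel) + (\<integral>s\<in>{t..T}. \<phi> s \<partial>lborel)"
    unfolding un
    by (rule set_integral_Un) (auto intro!: set_integrable_bdd[OF _ b] simp: emeasure_lborel_Icc_eq t)
  also have "(\<integral>s\<in>{t..T}. \<phi> s \<partial>lborel) = (\<integral>s. indicator {t..T} s * \<phi> s \<partial>lborel)"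
    by (simp add: set_lebesgue_integral_def)
  also have "\<dots> = (\<integral>u. indicator {t..T} (t + 1 * u) * \<phi> (t + 1 * u) \<partial>lborel)"
    using lborel_integral_real_affine[of 1 "\<lambda>s. indicator {t..T} s * \<phi> s" t] by simp
  also have "\<dots> = (\<integral>u. indicator {0..T-t} u * \<phi> (t+u) \<partial>lborel)"
    by (rule Bochner_Integration.integral_cong) (auto simp: indicator_def)
  finally show ?thesis .
qed



context
  fixes M :: "'a::{metric_space, second_countable_topology} \<Rightarrow> 'w measure"
    and F :: "real \<Rightarrow> 'w measure"
    and X :: "real \<Rightarrow> 'w \<Rightarrow> 'a"
    and \<mu> :: "'a measure" and f :: "'a \<Rightarrow> real" and c :: real and K :: "'a \<Rightarrow> real" and CK :: real
    and h :: "real \<Rightarrow> real" and B :: "'a set"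
  assumes mk: "standard_markov M F X"
    and mu: "prob_space \<mu>" "sets \<mu> = sets borel"
    and fm[measurable]: "f \<in> borel_measurable borel" and fc: "\<And>y. \<bar>f y\<bar> \<le> c"
    and Bc: "closed B"
    and KB: "\<And>y. y \<in> B \<Longrightarrow> K y \<le> CK" and CK0: "0 \<le> CK"
    and D1: "\<And>y t. 0 \<le> t \<Longrightarrow> tv_dist (trans_prob M X t y) \<mu> < K y * h t"
    and hint: "set_integrable lborel {0..} h" and hnn: "\<And>t. 0 \<le> t \<Longrightarrow> 0 \<le> h t"
begin

lemma c0: "0 \<le> c" using fc[of undefined] by linarith

lemma mf_le: "\<bar>\<integral>y. f y \<partial>\<mu>\<bar> \<le> c"
proof -
  interpret prob_space \<mu> by (rule mu)
  have "\<bar>\<integral>y. f y \<partial>\<mu>\<bar> \<le> (\<integral>y. \<bar>f y\<bar> \<partial>\<mu>)"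
    using integral_norm_bound[of \<mu> f] by simp
  also have "\<dots> \<le> (\<integral>y. c \<partial>\<mu>)"
    by (rule integral_mono) (use fc mu(2) in \<open>auto intro!: integrable_const_bound[where B=c] simp: measurable_cong_sets[OF mu(2) refl]\<close>)
  finally have "\<bar>\<integral>y. f y \<partial>\<mu>\<bar> \<le> (\<integral>y. c \<partial>\<mu>)" .
  then show ?thesis by (simp add: prob_space)
qed

lemma Pf_le: "0 \<le> u \<Longrightarrow> \<bar>\<integral>\<omega>. f (X u \<omega>) \<partial>M y\<bar> \<le> c"
proof -
  assume u: "0 \<le> u"
  interpret prob_space "M y" by (rule markov_prob[OF mk])
  have Xm[measurable]: "X u \<in> borel_measurable (M y)" by (rule markov_Xm'[OF mk u])
  have "\<bar>\<integral>\<omega>. f (X u \<omega>) \<partial>M y\<bar> \<le> (\<integral>\<omega>. \<bar>f (X u \<omega>)\<bar> \<partial>M y)"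
    using integral_norm_bound[of "M y" "\<lambda>\<omega>. f (X u \<omega>)"] by simp
  also have "\<dots> \<le> (\<integral>\<omega>. c \<partial>M y)"
    by (rule integral_mono) (use fc in \<open>auto intro!: integrable_const_bound[where B=c]\<close>)
  finally have "\<bar>\<integral>\<omega>. f (X u \<omega>) \<partial>M y\<bar> \<le> (\<integral>\<omega>. c \<partial>M y)" .
  then show ?thesis by (simp add: prob_space)
qed

lemma Pf_bound:
  assumes u: "0 \<le> u" and y: "y \<in> B"
  shows "\<bar>(\<integral>\<omega>. f (X u \<omega>) \<partial>M y) - (\<integral>y. f y \<partial>\<mu>)\<bar> \<le> 2 * c * CK * h u"
proof -
  have Xm: "X u \<in> measurable (M y) borel" by (rule markov_Xm'[OF mk u])
  have P: "prob_space (trans_prob M X u y)" unfolding trans_prob_def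
    by (rule prob_space.prob_space_distr[OF markov_prob[OF mk] Xm])
  have Ps: "sets (trans_prob M X u y) = sets borel" by (simp add: trans_prob_def)
  have "(\<integral>\<omega>. f (X u \<omega>) \<partial>M y) = (\<integral>z. f z \<partial>trans_prob M X u y)"
    unfolding trans_prob_def by (rule integral_distr[OF Xm fm, symmetric])
  then have "\<bar>(\<integral>\<omega>. f (X u \<omega>) \<partial>M y) - (\<integral>y. f y \<partial>\<mu>)\<bar> \<le> 2 * c * tv_dist (trans_prob M X u y) \<mu>"
    using tv_integral[OF P Ps mu fm fc] by simp
  also have "\<dots> \<le> 2 * c * (K y * h u)"
    using D1[OF u, of y] c0 by (intro mult_left_mono) auto
  also have "\<dots> \<le> 2 * c * (CK * h u)"
    using KB[OF y] hnn[OF u] c0 by (intro mult_left_mono mult_right_mono) auto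
  finally show ?thesis by (simp add: mult.assoc)
qed


lemma decomp:
  assumes T0: "0 \<le> T"
  defines "\<tau> \<equiv> hitting_time X B"
  defines "mf \<equiv> (\<integral>y. f y \<partial>\<mu>)"
  defines "H \<equiv> (\<integral>t\<in>{0..}. h t \<partial>lborel)"
  shows "\<exists>R. \<bar>R\<bar> \<le> 2 * c * CK * H \<and> integrable (M x) (\<lambda>\<omega>. \<integral>s\<in>{0..<enn2real (min (\<tau> \<omega>) (ennreal T))}. (f (X s \<omega>) - mf) \<partial>lborel) \<and>
     (\<integral>\<omega>. (\<integral>s\<in>{0..T}. (f (X s \<omega>) - mf) \<partial>lborel) \<partial>M x) =
     (\<integral>\<omega>. (\<integral>s\<in>{0..<enn2real (min (\<tau> \<omega>) (ennreal T))}. (f (X s \<omega>) - mf) \<partial>lborel) \<partial>M x) + R"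
proof -
  interpret P: prob_space "M x" by (rule markov_prob[OF mk])
  interpret pair_sigma_finite "M x" lborel
    by (simp add: pair_sigma_finite_def P.sigma_finite_measure_axioms lborel.sigma_finite_measure_axioms)
  have st: "is_stopping_time F \<tau>" unfolding \<tau>_def by (rule markov_hit[OF mk]) (use Bc in simp)
  have \<tau>m[measurable]: "\<tau> \<in> borel_measurable (M x)" by (rule stop_meas[OF mk st])
  define Y where "Y = (\<lambda>p. X (max 0 (snd p)) (fst p))"
  have Ym[measurable]: "Y \<in> borel_measurable (M x \<Otimes>\<^sub>M (lborel::real measure))" unfolding Y_def by (rule joint_meas[OF mk])
  have mfc: "\<bar>mf\<bar> \<le> c" unfolding mf_def by (rule mf_le)
  have phib: "\<bar>f z - mf\<bar> \<le> 2 * c" for z using fc[of z] mfc by linarith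
  define G where "G = (\<lambda>p. indicator {0..T} (snd p) * (if \<tau> (fst p) \<le> ennreal (T - snd p) then f (Y (fst p, enn2real (\<tau> (fst p)) + snd p)) - mf else 0))"
  have Gm[measurable]: "G \<in> borel_measurable (M x \<Otimes>\<^sub>M (lborel::real measure))" unfolding G_def by measurable
  have Gb: "\<bar>G p\<bar> \<le> 2 * c * indicator {0..T} (snd p)" for p
    using phib c0 by (auto simp: G_def indicator_def)
  have Gint: "integrable (M x \<Otimes>\<^sub>M (lborel::real measure)) G"
  proof (rule Bochner_Integration.integrable_bound[of _ "\<lambda>p. 2*c * indicator (space (M x) \<times> {0..T}) p"])
    have "emeasure (M x \<Otimes>\<^sub>M (lborel::real measure)) (space (M x) \<times> {0..T}) = emeasure (M x) (space (M x)) * emeasure lborel {0..T}"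
      by (rule lborel.emeasure_pair_measure_Times) auto
    then have "emeasure (M x \<Otimes>\<^sub>M (lborel::real measure)) (space (M x) \<times> {0..T}) < \<infinity>"
      using T0 by (simp add: P.emeasure_space_1)
    then show "integrable (M x \<Otimes>\<^sub>M (lborel::real measure)) (\<lambda>p. 2*c * indicator (space (M x) \<times> {0..T}) p)"
      by (intro integrable_mult_right integrable_real_indicator) auto
    show "AE p in M x \<Otimes>\<^sub>M (lborel::real measure). norm (G p) \<le> norm (2*c * indicator (space (M x) \<times> {0..T}) p)"
    proof (rule AE_I2)
      fix p assume "p \<in> space (M x \<Otimes>\<^sub>M (lborel::real measure))"
      then have "fst p \<in> space (M x)" by (auto simp: space_pair_measure)
      then show "norm (G p) \<le> norm (2*c * indicator (space (M x) \<times> {0..T}) p)"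
        using Gb[of p] c0 by (cases p) (auto simp: indicator_def)
    qed
  qed (fact Gm)
  define tot where "tot \<omega> = (\<integral>s\<in>{0..T}. (f (X s \<omega>) - mf) \<partial>lborel)" for \<omega>
  define m where "m \<omega> = enn2real (min (\<tau> \<omega>) (ennreal T))" for \<omega>
  define fst' where "fst' \<omega> = (\<integral>s\<in>{0..<m \<omega>}. (f (X s \<omega>) - mf) \<partial>lborel)" for \<omega>
  define R where "R \<omega> = (\<integral>u. G (\<omega>, u) \<partial>lborel)" for \<omega>
  have path: "tot \<omega> = fst' \<omega> + R \<omega>" if om: "\<omega> \<in> space (M x)" for \<omega>
  proof -
    define \<phi> where "\<phi> s = f (Y (\<omega>, s)) - mf" for s
    have ym: "(\<lambda>s. Y (\<omega>, s)) \<in> borel_measurable lborel" by (rule measurable_Pair2[OF Ym om])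
    then have ym': "(\<lambda>s. Y (\<omega>, s)) \<in> borel_measurable borel" by simp
    have \<phi>m: "\<phi> \<in> borel_measurable borel" unfolding \<phi>_def using ym' by measurable
    have \<phi>b: "\<bar>\<phi> s\<bar> \<le> 2*c" for s unfolding \<phi>_def by (rule phib)
    have tot\<phi>: "tot \<omega> = (\<integral>s\<in>{0..T}. \<phi> s \<partial>lborel)"
      unfolding tot_def \<phi>_def by (rule set_lebesgue_integral_cong) (auto simp: Y_def)
    have m0: "0 \<le> m \<omega>" by (simp add: m_def)
    have fst\<phi>: "fst' \<omega> = (\<integral>s\<in>{0..<m \<omega>}. \<phi> s \<partial>lborel)"
      unfolding fst'_def \<phi>_def by (rule set_lebesgue_integral_cong) (auto simp: Y_def)
    show ?thesis
    proof (cases "\<tau> \<omega> \<le> ennreal T")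
      case True
      define t where "t = enn2real (\<tau> \<omega>)"
      have t0: "0 \<le> t" by (simp add: t_def)
      have fin: "\<tau> \<omega> < \<infinity>" using le_less_trans[OF True ennreal_less_top[of T]] by simp
      have \<tau>t: "\<tau> \<omega> = ennreal t" using fin by (simp add: t_def less_top)
      have tT: "t \<le> T" using True \<tau>t T0 by (simp add: ennreal_le_iff)
      have mt: "m \<omega> = t" using True by (simp add: m_def t_def min_def)
      have sp: "tot \<omega> = (\<integral>s\<in>{0..<t}. \<phi> s \<partial>lborel) + (\<integral>u. indicator {0..T-t} u * \<phi> (t+u) \<partial>lborel)"
        unfolding tot\<phi> by (rule split_path[OF \<phi>m \<phi>b t0 tT])
      have "G (\<omega>, u) = indicator {0..T-t} u * \<phi> (t+u)" for u
      proof -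
        have e1: "ennreal t \<le> ennreal (T - u) \<longleftrightarrow> t \<le> T - u" if "u \<le> T"
          using that by (simp add: ennreal_le_iff)
        have iff: "(0 \<le> u \<and> u \<le> T \<and> ennreal t \<le> ennreal (T - u)) \<longleftrightarrow> (0 \<le> u \<and> u \<le> T - t)"
        proof (cases "u \<le> T")
          case True then show ?thesis using e1 by linarith
        next
          case False then show ?thesis using t0 by linarith
        qed
        have et: "enn2real (\<tau> \<omega>) = t" by (simp add: t_def)
        have G1: "G (\<omega>, u) = (if 0 \<le> u \<and> u \<le> T \<and> ennreal t \<le> ennreal (T - u) then \<phi> (t+u) else 0)"
          unfolding G_def \<phi>_def using \<tau>t t0 by (simp add: indicator_def)
        show ?thesis unfolding G1 iff by (simp add: indicator_def)
      qed
      then have "R \<omega> = (\<integral>u. indicator {0..T-t} u * \<phi> (t+u) \<partial>lborel)" unfolding R_def by simp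
      then show ?thesis using sp fst\<phi> mt by simp
    next
      case False
      have mt: "m \<omega> = T" using False T0 by (simp add: m_def min_def)
      have sp: "tot \<omega> = (\<integral>s\<in>{0..<T}. \<phi> s \<partial>lborel) + (\<integral>u. indicator {0..T-T} u * \<phi> (T+u) \<partial>lborel)"
        unfolding tot\<phi> by (rule split_path[OF \<phi>m \<phi>b T0 order_refl])
      have z1: "(\<integral>u. indicator {0..T-T} u * \<phi> (T+u) \<partial>lborel) = 0"
      proof -
        have "(\<lambda>u. indicator {0..T-T} u * \<phi> (T+u)) = (\<lambda>u. indicator {0} u * \<phi> T)"
          by (auto simp: indicator_def fun_eq_iff)
        then show ?thesis by simp
      qed
      have "G (\<omega>, u) = 0" for u
      proof -
        have "\<not> \<tau> \<omega> \<le> ennreal (T - u)" if "0 \<le> u"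
        proof
          assume a: "\<tau> \<omega> \<le> ennreal (T - u)"
          have "ennreal (T - u) \<le> ennreal T" using that by (intro ennreal_leI) simp
          with a have "\<tau> \<omega> \<le> ennreal T" by (rule order.trans)
          with False show False by simp
        qed
        then show ?thesis unfolding G_def by (auto simp: indicator_def)
      qed
      then have "R \<omega> = 0" unfolding R_def by simp
      then show ?thesis using sp fst\<phi> mt z1 by simp
    qed
  qed
  have tot_int: "integrable (M x) tot"
  proof -
    define tot2 where "tot2 \<omega> = (\<integral>s. indicator {0..T} s * (f (Y (\<omega>, s)) - mf) \<partial>lborel)" for \<omega>
    have tt: "tot \<omega> = tot2 \<omega>" for \<omega>
      unfolding tot_def tot2_def set_lebesgue_integral_def
      by (rule Bochner_Integration.integral_cong) (auto simp: Y_def indicator_def)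
    have m2: "tot2 \<in> borel_measurable (M x)"
      unfolding tot2_def by (rule lborel.borel_measurable_lebesgue_integral) measurable
    have b2: "\<bar>tot2 \<omega>\<bar> \<le> 2*c*T" if om: "\<omega> \<in> space (M x)" for \<omega>
    proof -
      have ym: "(\<lambda>s. Y (\<omega>, s)) \<in> borel_measurable lborel" by (rule measurable_Pair2[OF Ym om])
      then have ym': "(\<lambda>s. Y (\<omega>, s)) \<in> borel_measurable borel" by simp
      have "integrable lborel (\<lambda>s. indicator {0..T} s *\<^sub>R (f (Y (\<omega>, s)) - mf))"
        using set_integrable_bdd[of "\<lambda>s. f (Y (\<omega>, s)) - mf" "2*c" "{0..T}"] phib ym' T0
        unfolding set_integrable_def by (simp add: emeasure_lborel_Icc_eq)
      moreover have "integrable lborel (\<lambda>s. indicator {0..T} s * (2*c))"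
        by (intro integrable_mult_left integrable_real_indicator) (auto simp: emeasure_lborel_Icc_eq)
      ultimately have "\<bar>tot2 \<omega>\<bar> \<le> (\<integral>s. indicator {0..T} s * (2*c) \<partial>lborel)"
        unfolding tot2_def
        by (intro integral_abs_bound_integral) (auto simp: indicator_def phib)
      also have "\<dots> = 2*c*T" using T0 by simp
      finally show ?thesis .
    qed
    have "integrable (M x) tot2"
      by (rule P.integrable_const_bound[where B="2*c*T"]) (use b2 m2 in auto)
    then show ?thesis using tt by (simp add: fun_eq_iff[symmetric] tt[abs_def])
  qed
  have R_int: "integrable (M x) R"
    unfolding R_def using integrable_fst[of "\<lambda>\<omega> u. G (\<omega>, u)"] Gint by simp
  have fst_int: "integrable (M x) fst'"
  proof -
    have "integrable (M x) (\<lambda>\<omega>. tot \<omega> - R \<omega>)" using tot_int R_int by simp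
    moreover have "integrable (M x) fst' \<longleftrightarrow> integrable (M x) (\<lambda>\<omega>. tot \<omega> - R \<omega>)"
      by (rule Bochner_Integration.integrable_cong) (auto simp: path)
    ultimately show ?thesis by simp
  qed
  have E: "(\<integral>\<omega>. tot \<omega> \<partial>M x) = (\<integral>\<omega>. fst' \<omega> \<partial>M x) + (\<integral>\<omega>. R \<omega> \<partial>M x)"
  proof -
    have "(\<integral>\<omega>. tot \<omega> \<partial>M x) = (\<integral>\<omega>. fst' \<omega> + R \<omega> \<partial>M x)"
      by (rule Bochner_Integration.integral_cong) (auto simp: path)
    also have "\<dots> = (\<integral>\<omega>. fst' \<omega> \<partial>M x) + (\<integral>\<omega>. R \<omega> \<partial>M x)"
      using fst_int R_int by simp
    finally show ?thesis .
  qed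
  have ER: "(\<integral>\<omega>. R \<omega> \<partial>M x) = (\<integral>u. (\<integral>\<omega>. G (\<omega>, u) \<partial>M x) \<partial>lborel)"
    unfolding R_def using Fubini_integral[of "\<lambda>\<omega> u. G (\<omega>, u)"] Gint by simp
  have inner: "\<bar>\<integral>\<omega>. G (\<omega>, u) \<partial>M x\<bar> \<le> indicator {0..T} u * (2 * c * CK * h u)" for u
  proof (cases "0 \<le> u \<and> u \<le> T")
    case False
    then have "G (\<omega>, u) = 0" for \<omega> by (auto simp: G_def indicator_def)
    then show ?thesis using False by (auto simp: indicator_def)
  next
    case True
    then have u0: "0 \<le> u" and uT: "u \<le> T" by auto
    define b where "b = 2 * c * CK * h u"
    have b0: "0 \<le> b" unfolding b_def using c0 CK0 hnn[OF u0] by simp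
    define A where "A = {\<omega> \<in> space (M x). \<tau> \<omega> \<le> ennreal (T - u)}"
    have Ast: "A \<in> stopped_sets (M x) F \<tau>" unfolding A_def by (rule stopped_le[OF mk st]) (use uT in simp)
    have Am[measurable]: "A \<in> sets (M x)" unfolding A_def by measurable
    have Afin: "A \<inter> {\<omega>. \<tau> \<omega> < \<infinity>} = A"
      unfolding A_def using ennreal_less_top by (auto intro: le_less_trans)
    define Pf where "Pf y = (\<integral>\<omega>'. f (X u \<omega>') \<partial>M y)" for y
    have Pfm[measurable]: "Pf \<in> borel_measurable borel" unfolding Pf_def by (rule kernel_meas[OF mk u0 fm])
    define Z where "Z \<omega> = f (Y (\<omega>, enn2real (\<tau> \<omega>) + u))" for \<omega>
    define W where "W \<omega> = Pf (Y (\<omega>, enn2real (\<tau> \<omega>)))" for \<omega>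
    have Zm[measurable]: "Z \<in> borel_measurable (M x)" unfolding Z_def by measurable
    have Wm[measurable]: "W \<in> borel_measurable (M x)" unfolding W_def by measurable
    have Zb: "\<bar>Z \<omega>\<bar> \<le> c" for \<omega> unfolding Z_def by (rule fc)
    have Wb: "\<bar>W \<omega>\<bar> \<le> c" for \<omega> unfolding W_def Pf_def by (rule Pf_le[OF u0])
    have intAZ: "integrable (M x) (\<lambda>\<omega>. indicator A \<omega> * Z \<omega>)"
      by (rule P.integrable_const_bound[where B=c]) (use Zb c0 in \<open>auto simp: indicator_def\<close>)
    have intAW: "integrable (M x) (\<lambda>\<omega>. indicator A \<omega> * W \<omega>)"
      by (rule P.integrable_const_bound[where B=c]) (use Wb c0 in \<open>auto simp: indicator_def\<close>)
    have intA: "integrable (M x) (\<lambda>\<omega>. indicator A \<omega> * mf)"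
      by (rule P.integrable_const_bound[where B="\<bar>mf\<bar>"]) (auto simp: indicator_def)
    have fb: "bounded (range f)" using fc by (auto simp: bounded_iff intro!: exI[of _ c])
    have SM: "(\<integral>\<omega>. indicator A \<omega> * Z \<omega> \<partial>M x) = (\<integral>\<omega>. indicator A \<omega> * W \<omega> \<partial>M x)"
    proof -
      have "(\<integral>\<omega>. indicator A \<omega> * Z \<omega> \<partial>M x) =
          (\<integral>\<omega>. indicator (A \<inter> {\<omega>. \<tau> \<omega> < \<infinity>}) \<omega> * f (X (enn2real (\<tau> \<omega>) + u) \<omega>) \<partial>M x)"
        unfolding Afin by (rule Bochner_Integration.integral_cong) (auto simp: Z_def Y_def u0)
      also have "\<dots> = (\<integral>\<omega>. indicator (A \<inter> {\<omega>. \<tau> \<omega> < \<infinity>}) \<omega> *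
               (\<integral>\<omega>'. f (X u \<omega>') \<partial>M (X (enn2real (\<tau> \<omega>)) \<omega>)) \<partial>M x)"
        by (rule markov_SM[OF mk st u0 Ast fm fb])
      also have "\<dots> = (\<integral>\<omega>. indicator A \<omega> * W \<omega> \<partial>M x)"
        unfolding Afin by (rule Bochner_Integration.integral_cong) (auto simp: W_def Y_def Pf_def)
      finally show ?thesis .
    qed
    have GA: "(\<integral>\<omega>. G (\<omega>, u) \<partial>M x) = (\<integral>\<omega>. indicator A \<omega> * (W \<omega> - mf) \<partial>M x)"
    proof -
      have "(\<integral>\<omega>. G (\<omega>, u) \<partial>M x) = (\<integral>\<omega>. indicator A \<omega> * Z \<omega> - indicator A \<omega> * mf \<partial>M x)"
        using True by (intro Bochner_Integration.integral_cong) (auto simp: G_def A_def Z_def indicator_def)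
      also have "\<dots> = (\<integral>\<omega>. indicator A \<omega> * Z \<omega> \<partial>M x) - (\<integral>\<omega>. indicator A \<omega> * mf \<partial>M x)"
        using intAZ intA by (rule Bochner_Integration.integral_diff)
      also have "\<dots> = (\<integral>\<omega>. indicator A \<omega> * W \<omega> \<partial>M x) - (\<integral>\<omega>. indicator A \<omega> * mf \<partial>M x)"
        by (simp only: SM)
      also have "\<dots> = (\<integral>\<omega>. indicator A \<omega> * W \<omega> - indicator A \<omega> * mf \<partial>M x)"
        using intAW intA by (rule Bochner_Integration.integral_diff[symmetric])
      also have "\<dots> = (\<integral>\<omega>. indicator A \<omega> * (W \<omega> - mf) \<partial>M x)"
        by (simp add: algebra_simps)
      finally show ?thesis .
    qed
    have pw: "\<bar>indicator A \<omega> * (W \<omega> - mf)\<bar> \<le> b" if om: "\<omega> \<in> space (M x)" for \<omega>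
    proof (cases "\<omega> \<in> A")
      case True
      then have fin: "\<tau> \<omega> < \<infinity>" using Afin by auto
      have inB: "X (enn2real (\<tau> \<omega>)) \<omega> \<in> B"
        unfolding \<tau>_def by (rule hit_in[OF mk om Bc]) (use fin in \<open>simp add: \<tau>_def\<close>)
      have "W \<omega> = (\<integral>\<omega>'. f (X u \<omega>') \<partial>M (X (enn2real (\<tau> \<omega>)) \<omega>))" by (simp add: W_def Y_def Pf_def)
      then show ?thesis using True Pf_bound[OF u0 inB] by (simp add: b_def mf_def)
    next
      case False then show ?thesis using b0 by simp
    qed
    have intg: "integrable (M x) (\<lambda>\<omega>. indicator A \<omega> * (W \<omega> - mf))"
      by (rule P.integrable_const_bound[where B=b]) (use pw in auto)
    have "\<bar>\<integral>\<omega>. indicator A \<omega> * (W \<omega> - mf) \<partial>M x\<bar> \<le> (\<integral>\<omega>. \<bar>indicator A \<omega> * (W \<omega> - mf)\<bar> \<partial>M x)"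
      using integral_norm_bound[of "M x" "\<lambda>\<omega>. indicator A \<omega> * (W \<omega> - mf)"] by simp
    also have "\<dots> \<le> (\<integral>\<omega>. b \<partial>M x)"
      by (rule integral_mono) (use intg pw in auto)
    also have "\<dots> = b" by (simp add: P.prob_space)
    finally show ?thesis using GA True by (simp add: b_def)
  qed
  have ERb: "\<bar>\<integral>\<omega>. R \<omega> \<partial>M x\<bar> \<le> 2 * c * CK * H"
  proof -
    have hT: "integrable lborel (\<lambda>u. indicator {0..T} u * h u)"
      using set_integrable_subset[OF hint, of "{0..T}"] unfolding set_integrable_def by simp
    have h0: "integrable lborel (\<lambda>u. indicator {0..} u * h u)"
      using hint unfolding set_integrable_def by simp
    have i1: "integrable lborel (\<lambda>u. \<integral>\<omega>. G (\<omega>, u) \<partial>M x)"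
      using integrable_snd[of "\<lambda>\<omega> u. G (\<omega>, u)"] Gint by simp
    have "\<bar>\<integral>\<omega>. R \<omega> \<partial>M x\<bar> \<le> (\<integral>u. indicator {0..T} u * (2 * c * CK * h u) \<partial>lborel)"
    proof -
      have eqf: "(\<lambda>u. indicator {0..T} u * (2 * c * CK * h u)) = (\<lambda>u. (2*c*CK) * (indicator {0..T} u * h u))"
        by (auto simp: fun_eq_iff)
      have ib: "integrable lborel (\<lambda>u. indicator {0..T} u * (2 * c * CK * h u))"
        unfolding eqf using hT by simp
      show ?thesis unfolding ER by (rule integral_abs_bound_integral[OF i1 ib]) (rule inner)
    qed
    also have "\<dots> = (\<integral>u. (2 * c * CK) * (indicator {0..T} u * h u) \<partial>lborel)"
      by (rule Bochner_Integration.integral_cong) auto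
    also have "\<dots> = 2 * c * CK * (\<integral>u. indicator {0..T} u * h u \<partial>lborel)"
      by (rule integral_mult_right_zero)
    also have "\<dots> \<le> 2 * c * CK * (\<integral>u. indicator {0..} u * h u \<partial>lborel)"
      using c0 CK0 by (intro mult_left_mono integral_mono hT h0) (auto simp: indicator_def hnn)
    also have "\<dots> = 2 * c * CK * H" by (simp add: H_def set_lebesgue_integral_def)
    finally show ?thesis .
  qed
  show ?thesis
    using E ERb fst_int unfolding tot_def fst'_def m_def by blast
qed

lemma path_int:
  assumes om: "\<omega> \<in> space (M x)" and a0: "0 \<le> a"
  shows "set_integrable lborel {0..<a} (\<lambda>s. f (X s \<omega>) - (\<integral>y. f y \<partial>\<mu>))"
proof -
  define Y where "Y = (\<lambda>p. X (max 0 (snd p)) (fst p))"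
  have Ym[measurable]: "Y \<in> borel_measurable (M x \<Otimes>\<^sub>M (lborel::real measure))" unfolding Y_def by (rule joint_meas[OF mk])
  have ym: "(\<lambda>s. Y (\<omega>, s)) \<in> borel_measurable lborel" by (rule measurable_Pair2[OF Ym om])
  then have ym': "(\<lambda>s. Y (\<omega>, s)) \<in> borel_measurable borel" by simp
  have phib: "\<bar>f z - (\<integral>y. f y \<partial>\<mu>)\<bar> \<le> 2 * c" for z using fc[of z] mf_le by linarith
  have "set_integrable lborel {0..<a} (\<lambda>s. f (Y (\<omega>, s)) - (\<integral>y. f y \<partial>\<mu>))"
    by (rule set_integrable_bdd[OF _ phib]) (use ym' a0 in auto)
  moreover have "set_integrable lborel {0..<a} (\<lambda>s. f (Y (\<omega>, s)) - (\<integral>y. f y \<partial>\<mu>)) \<longleftrightarrow>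
      set_integrable lborel {0..<a} (\<lambda>s. f (X s \<omega>) - (\<integral>y. f y \<partial>\<mu>))"
    unfolding set_integrable_def
    by (rule Bochner_Integration.integrable_cong) (auto simp: Y_def indicator_def)
  ultimately show ?thesis by simp
qed

lemma m_facts:
  assumes T0: "0 \<le> T"
  defines "m \<equiv> (\<lambda>\<omega>. enn2real (min (hitting_time X B \<omega>) (ennreal T)))"
  shows "integrable (M x) m" "0 \<le> (\<integral>\<omega>. m \<omega> \<partial>M x)"
    "ennreal (\<integral>\<omega>. m \<omega> \<partial>M x) = (\<integral>\<^sup>+\<omega>. min (hitting_time X B \<omega>) (ennreal T) \<partial>M x)"
proof -
  interpret P: prob_space "M x" by (rule markov_prob[OF mk])
  have st: "is_stopping_time F (hitting_time X B)" by (rule markov_hit[OF mk]) (use Bc in simp)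
  have \<tau>m[measurable]: "hitting_time X B \<in> borel_measurable (M x)" by (rule stop_meas[OF mk st])
  have mm[measurable]: "m \<in> borel_measurable (M x)" unfolding m_def by measurable
  have mb: "0 \<le> m \<omega>" "m \<omega> \<le> T" for \<omega>
  proof -
    show "0 \<le> m \<omega>" by (simp add: m_def)
    have "min (hitting_time X B \<omega>) (ennreal T) \<le> ennreal T" by simp
    then have "enn2real (min (hitting_time X B \<omega>) (ennreal T)) \<le> enn2real (ennreal T)"
      by (rule enn2real_mono) simp
    then show "m \<omega> \<le> T" unfolding m_def using T0 by simp
  qed
  show mi: "integrable (M x) m" by (rule P.integrable_const_bound[where B=T]) (use mb in auto)
  show "0 \<le> (\<integral>\<omega>. m \<omega> \<partial>M x)" using mb by simp
  have "(\<integral>\<^sup>+\<omega>. ennreal (m \<omega>) \<partial>M x) = ennreal (\<integral>\<omega>. m \<omega> \<partial>M x)"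
    by (rule nn_integral_eq_integral[OF mi]) (use mb in auto)
  moreover have "ennreal (m \<omega>) = min (hitting_time X B \<omega>) (ennreal T)" for \<omega>
  proof -
    have "min (hitting_time X B \<omega>) (ennreal T) < top"
      using min.cobounded2 ennreal_less_top by (rule le_less_trans)
    then have "min (hitting_time X B \<omega>) (ennreal T) \<noteq> top" by simp
    then show ?thesis unfolding m_def by (simp add: ennreal_enn2real_if)
  qed
  ultimately show "ennreal (\<integral>\<omega>. m \<omega> \<partial>M x) = (\<integral>\<^sup>+\<omega>. min (hitting_time X B \<omega>) (ennreal T) \<partial>M x)"
    by simp
qed

lemma fst_bounds:
  assumes om: "\<omega> \<in> space (M x)" and T0: "0 \<le> T"
  defines "m \<equiv> enn2real (min (hitting_time X B \<omega>) (ennreal T))"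
  shows "(\<integral>s\<in>{0..<m}. (f (X s \<omega>) - (\<integral>y. f y \<partial>\<mu>)) \<partial>lborel) \<le> 2 * c * m"
    and "(\<And>y. y \<notin> B \<Longrightarrow> \<delta> \<le> f y - (\<integral>y. f y \<partial>\<mu>)) \<Longrightarrow>
         \<delta> * m \<le> (\<integral>s\<in>{0..<m}. (f (X s \<omega>) - (\<integral>y. f y \<partial>\<mu>)) \<partial>lborel)"
proof -
  have m0: "0 \<le> m" by (simp add: m_def)
  have ci: "set_integrable lborel {0..<m} (\<lambda>s. k)" for k :: real
    unfolding set_integrable_def using m0 by (intro integrable_scaleR_left integrable_real_indicator) auto
  have cv: "(\<integral>s\<in>{0..<m}. k \<partial>lborel) = k * m" for k :: real
    using m0 by (subst set_integral_const) auto
  have phib: "f z - (\<integral>y. f y \<partial>\<mu>) \<le> 2 * c" for z using fc[of z] mf_le by linarith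
  have "(\<integral>s\<in>{0..<m}. (f (X s \<omega>) - (\<integral>y. f y \<partial>\<mu>)) \<partial>lborel) \<le> (\<integral>s\<in>{0..<m}. 2 * c \<partial>lborel)"
    by (rule set_integral_mono[OF path_int[OF om m0] ci]) (rule phib)
  then show "(\<integral>s\<in>{0..<m}. (f (X s \<omega>) - (\<integral>y. f y \<partial>\<mu>)) \<partial>lborel) \<le> 2 * c * m" by (simp only: cv)
  assume dl: "\<And>y. y \<notin> B \<Longrightarrow> \<delta> \<le> f y - (\<integral>y. f y \<partial>\<mu>)"
  have "(\<integral>s\<in>{0..<m}. \<delta> \<partial>lborel) \<le> (\<integral>s\<in>{0..<m}. (f (X s \<omega>) - (\<integral>y. f y \<partial>\<mu>)) \<partial>lborel)"
  proof (rule set_integral_mono[OF ci path_int[OF om m0]])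
    fix s assume s: "s \<in> {0..<m}"
    have "X s \<omega> \<notin> B"
    proof
      assume "X s \<omega> \<in> B"
      then have "hitting_time X B \<omega> \<le> ennreal s" using s by (intro hit_le[OF mk]) auto
      then have "min (hitting_time X B \<omega>) (ennreal T) \<le> ennreal s" by (rule min.coboundedI1)
      then have "enn2real (min (hitting_time X B \<omega>) (ennreal T)) \<le> enn2real (ennreal s)"
        by (rule enn2real_mono) simp
      then have "m \<le> s" unfolding m_def using s by simp
      then show False using s by simp
    qed
    then show "\<delta> \<le> f (X s \<omega>) - (\<integral>y. f y \<partial>\<mu>)" by (rule dl)
  qed
  then show "\<delta> * m \<le> (\<integral>s\<in>{0..<m}. (f (X s \<omega>) - (\<integral>y. f y \<partial>\<mu>)) \<partial>lborel)" by (simp add: cv)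
qed

lemma V_bounds:
  fixes x :: 'a and e z \<delta> :: real
  assumes T0: "0 \<le> T"
  defines "V \<equiv> (\<integral>\<omega>. (\<integral>s\<in>{0..T}. (f (X s \<omega>) - (\<integral>y. f y \<partial>\<mu>)) \<partial>lborel) \<partial>M x)"
  defines "C \<equiv> 2 * c * CK * (\<integral>t\<in>{0..}. h t \<partial>lborel)"
  shows "0 \<le> e \<Longrightarrow> (\<integral>\<^sup>+\<omega>. hitting_time X B \<omega> \<partial>M x) \<le> ennreal e \<Longrightarrow> V \<le> 2 * c * e + C"
    and "(\<And>y. y \<notin> B \<Longrightarrow> \<delta> \<le> f y - (\<integral>y. f y \<partial>\<mu>)) \<Longrightarrow> 0 \<le> \<delta> \<Longrightarrow> 0 \<le> z \<Longrightarrow>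
         ennreal z \<le> (\<integral>\<^sup>+\<omega>. min (hitting_time X B \<omega>) (ennreal T) \<partial>M x) \<Longrightarrow> \<delta> * z - C \<le> V"
proof -
  define m where "m = (\<lambda>\<omega>. enn2real (min (hitting_time X B \<omega>) (ennreal T)))"
  note mf = m_facts[OF T0, of x, folded m_def]
  obtain R where R: "\<bar>R\<bar> \<le> C"
    and fi: "integrable (M x) (\<lambda>\<omega>. \<integral>s\<in>{0..<m \<omega>}. (f (X s \<omega>) - (\<integral>y. f y \<partial>\<mu>)) \<partial>lborel)"
    and VE: "V = (\<integral>\<omega>. (\<integral>s\<in>{0..<m \<omega>}. (f (X s \<omega>) - (\<integral>y. f y \<partial>\<mu>)) \<partial>lborel) \<partial>M x) + R"
    using decomp[OF T0, of x] unfolding V_def C_def m_def by blast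
  {
    assume e0: "0 \<le> e" and Ee: "(\<integral>\<^sup>+\<omega>. hitting_time X B \<omega> \<partial>M x) \<le> ennreal e"
    have "(\<integral>\<^sup>+\<omega>. min (hitting_time X B \<omega>) (ennreal T) \<partial>M x) \<le> (\<integral>\<^sup>+\<omega>. hitting_time X B \<omega> \<partial>M x)"
      by (rule nn_integral_mono) simp
    then have "ennreal (\<integral>\<omega>. m \<omega> \<partial>M x) \<le> ennreal e" using mf(3) Ee by simp
    then have Em: "(\<integral>\<omega>. m \<omega> \<partial>M x) \<le> e" using e0 by (simp add: ennreal_le_iff)
    have "(\<integral>\<omega>. (\<integral>s\<in>{0..<m \<omega>}. (f (X s \<omega>) - (\<integral>y. f y \<partial>\<mu>)) \<partial>lborel) \<partial>M x) \<le> (\<integral>\<omega>. 2 * c * m \<omega> \<partial>M x)"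
      by (rule integral_mono[OF fi]) (use mf(1) fst_bounds(1)[OF _ T0] in \<open>auto simp: m_def\<close>)
    also have "\<dots> = 2 * c * (\<integral>\<omega>. m \<omega> \<partial>M x)" by simp
    also have "\<dots> \<le> 2 * c * e" using Em c0 by (intro mult_left_mono) auto
    finally show "V \<le> 2 * c * e + C" using VE R by linarith
  }
  {
    assume dl: "\<And>y. y \<notin> B \<Longrightarrow> \<delta> \<le> f y - (\<integral>y. f y \<partial>\<mu>)" and d0: "0 \<le> \<delta>" and z0: "0 \<le> z"
      and Ez: "ennreal z \<le> (\<integral>\<^sup>+\<omega>. min (hitting_time X B \<omega>) (ennreal T) \<partial>M x)"
    have "ennreal z \<le> ennreal (\<integral>\<omega>. m \<omega> \<partial>M x)" using Ez mf(3) by simp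
    then have Em: "z \<le> (\<integral>\<omega>. m \<omega> \<partial>M x)" using mf(2) by (simp add: ennreal_le_iff)
    have "\<delta> * z \<le> \<delta> * (\<integral>\<omega>. m \<omega> \<partial>M x)" using Em d0 by (intro mult_left_mono) auto
    also have "\<dots> = (\<integral>\<omega>. \<delta> * m \<omega> \<partial>M x)" by simp
    also have "\<dots> \<le> (\<integral>\<omega>. (\<integral>s\<in>{0..<m \<omega>}. (f (X s \<omega>) - (\<integral>y. f y \<partial>\<mu>)) \<partial>lborel) \<partial>M x)"
      by (rule integral_mono[OF _ fi]) (use mf(1) fst_bounds(2)[OF _ T0 dl] in \<open>auto simp: m_def\<close>)
    finally show "\<delta> * z - C \<le> V" using VE R by linarith
  }
qed
end


theorem lemma2p22:
  fixes M :: "'a::{heine_borel, second_countable_topology} \<Rightarrow> 'w measure"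
    and F :: "real \<Rightarrow> 'w measure"
    and X :: "real \<Rightarrow> 'w \<Rightarrow> 'a"
    and \<mu> :: "'a measure"
    and x0 :: 'a
    and f :: "'a \<Rightarrow> real"
    and K :: "'a \<Rightarrow> real"
    and h :: "real \<Rightarrow> real"
    and \<delta> :: real
  assumes markov: "standard_markov M F X"
    and feller: "weak_feller x0 M X"
    and ergodic: "ergodic_with M X \<mu>"
    and f_cont: "continuous_on UNIV f"
    and f_bdd: "bounded (range f)"
    and K_pos: "\<forall>x. 0 < K x"
    and K_bdd: "\<forall>S. compact S \<longrightarrow> bounded (K ` S)"
    and h_nonneg: "\<forall>t\<ge>0. 0 \<le> h t"
    and h_int: "set_integrable lborel {0..} h"
    and D1: "\<forall>x. \<forall>t\<ge>0. tv_dist (trans_prob M X t x) \<mu> < K x * h t"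
    and D2: "\<forall>x. \<forall>T\<ge>0. (\<integral>\<^sup>+\<omega>. ennreal (K (X T \<omega>)) \<partial>M x) < \<infinity>"
    and mu_neg: "(\<integral>y. f y \<partial>\<mu>) < 0"
    and \<delta>_pos: "0 < \<delta>"
    and L_compact: "compact {x. f x \<le> (\<integral>y. f y \<partial>\<mu>) + \<delta>}"
  defines "q \<equiv> (\<lambda>x. Limsup at_top (\<lambda>T::real.
              ereal (\<integral>\<omega>. (\<integral>s\<in>{0..T}. (f (X s \<omega>) - (\<integral>y. f y \<partial>\<mu>)) \<partial>lborel) \<partial>M x)))"
  shows "(q \<longlongrightarrow> \<infinity>) (at_infty_from x0) \<longleftrightarrow>
         (\<forall>n::nat. ((\<lambda>x. \<integral>\<^sup>+\<omega>. hitting_time X {y. dist x0 y \<le> real n} \<omega> \<partial>M x) \<longlongrightarrow> \<infinity>)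
                     (at_infty_from x0))"
proof -
  obtain c where fc: "\<And>y. \<bar>f y\<bar> \<le> c"
    using f_bdd unfolding bounded_any_center[where a=0] by (auto simp: dist_real_def)
  have mu1: "prob_space \<mu>" and mu2: "sets \<mu> = sets borel" using ergodic unfolding ergodic_with_def by auto
  have fm: "f \<in> borel_measurable borel" by (rule borel_measurable_continuous_onI[OF f_cont])
  have hnn: "\<And>t. 0 \<le> t \<Longrightarrow> 0 \<le> h t" using h_nonneg by auto
  have D1': "\<And>y t. 0 \<le> t \<Longrightarrow> tv_dist (trans_prob M X t y) \<mu> < K y * h t" using D1 by auto
  define Bn where "Bn n = {y. dist x0 y \<le> real n}" for n :: nat
  have BnC: "Bn n = cball x0 (real n)" for n by (auto simp: Bn_def cball_def)
  have Bc: "closed (Bn n)" for n by (simp add: BnC)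
  have "\<exists>C. 0 \<le> C \<and> (\<forall>y\<in>Bn n. K y \<le> C)" for n
  proof -
    have "bounded (K ` Bn n)" using K_bdd by (simp add: BnC)
    then obtain e where "\<forall>z\<in>K ` Bn n. dist 0 z \<le> e" unfolding bounded_any_center[where a=0] by blast
    then have "\<forall>y\<in>Bn n. K y \<le> max 0 e" by (force simp: dist_real_def)
    then show ?thesis by (intro exI[of _ "max 0 e"]) auto
  qed
  then obtain CK where CK0: "\<And>n. 0 \<le> CK n" and KB: "\<And>n y. y \<in> Bn n \<Longrightarrow> K y \<le> CK n" by metis
  define H where "H = (\<integral>t\<in>{0..}. h t \<partial>lborel)"
  define Cn where "Cn n = 2 * c * CK n * H" for n
  define E where "E n x = (\<integral>\<^sup>+\<omega>. hitting_time X (Bn n) \<omega> \<partial>M x)" for n x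
  define V where "V x T = (\<integral>\<omega>. (\<integral>s\<in>{0..T}. (f (X s \<omega>) - (\<integral>y. f y \<partial>\<mu>)) \<partial>lborel) \<partial>M x)" for x T
  have qV: "q x = Limsup at_top (\<lambda>T. ereal (V x T))" for x by (simp add: q_def V_def)
  have VB1: "V x T \<le> 2 * c * e + Cn n" if "0 \<le> T" "0 \<le> e" "E n x \<le> ennreal e" for n x T e
    using V_bounds(1)[where M=M and F=F and X=X and \<mu>=\<mu> and f=f and c=c and K=K and CK="CK n" and h=h and B="Bn n",
        OF markov mu1 mu2 fm fc Bc[where n=n] KB[where n=n] CK0[where n=n] D1' h_int hnn that(1,2)] that(3)
    by (simp add: V_def Cn_def H_def E_def)
  have VB2: "\<delta> * z - Cn n \<le> V x T" if "0 \<le> T" "\<And>y. y \<notin> Bn n \<Longrightarrow> \<delta> \<le> f y - (\<integral>y. f y \<partial>\<mu>)" "0 \<le> z"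
     "ennreal z \<le> (\<integral>\<^sup>+\<omega>. min (hitting_time X (Bn n) \<omega>) (ennreal T) \<partial>M x)" for n x T z
    using V_bounds(2)[where M=M and F=F and X=X and \<mu>=\<mu> and f=f and c=c and K=K and CK="CK n" and h=h and B="Bn n" and \<delta>=\<delta>,
        OF markov mu1 mu2 fm fc Bc[where n=n] KB[where n=n] CK0[where n=n] D1' h_int hnn that(1) that(2) _ that(3) that(4)] \<delta>_pos
    by (simp add: V_def Cn_def H_def E_def)
  have U: "q x \<le> ereal (2 * c * e + Cn n)" if e0: "0 \<le> e" and Ee: "E n x \<le> ennreal e" for n x e
  proof -
    have "\<forall>\<^sub>F T in at_top. ereal (V x T) \<le> ereal (2 * c * e + Cn n)"
      using eventually_ge_at_top[of "0::real"]
    proof eventually_elim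
      case (elim T)
      show ?case using VB1[OF elim e0 Ee] by simp
    qed
    then show ?thesis unfolding qV by (rule Limsup_bounded)
  qed
  have Lo: "ereal (\<delta> * z - Cn n) \<le> q x"
    if dl: "\<And>y. y \<notin> Bn n \<Longrightarrow> \<delta> \<le> f y - (\<integral>y. f y \<partial>\<mu>)" and z0: "0 \<le> z" and Ez: "ennreal z < E n x" for n x z
  proof -
    interpret P: prob_space "M x" by (rule markov_prob[OF markov])
    have st: "is_stopping_time F (hitting_time X (Bn n))" by (rule markov_hit[OF markov]) (use Bc in simp)
    have \<tau>m[measurable]: "hitting_time X (Bn n) \<in> borel_measurable (M x)" by (rule stop_meas[OF markov st])
    have lim: "(\<lambda>N. \<integral>\<^sup>+\<omega>. min (hitting_time X (Bn n) \<omega>) (of_nat N) \<partial>M x) \<longlonglongrightarrow> E n x"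
      unfolding E_def
    proof (rule nn_integral_LIMSEQ)
      show "incseq (\<lambda>N \<omega>. min (hitting_time X (Bn n) \<omega>) (of_nat N :: ennreal))"
        unfolding incseq_def le_fun_def by (intro allI impI min.mono order_refl) simp
      show "(\<lambda>\<omega>. min (hitting_time X (Bn n) \<omega>) (of_nat N :: ennreal)) \<in> borel_measurable (M x)" for N
        by measurable
      fix \<omega>
      have "(\<lambda>N. min (hitting_time X (Bn n) \<omega>) (of_nat N :: ennreal)) \<longlonglongrightarrow> min (hitting_time X (Bn n) \<omega>) top"
        by (intro tendsto_min tendsto_const of_nat_tendsto_top_ennreal)
      then show "(\<lambda>N. min (hitting_time X (Bn n) \<omega>) (of_nat N :: ennreal)) \<longlonglongrightarrow> hitting_time X (Bn n) \<omega>" by simp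
    qed
    obtain N where N: "ennreal z < (\<integral>\<^sup>+\<omega>. min (hitting_time X (Bn n) \<omega>) (of_nat N) \<partial>M x)"
      using order_tendstoD(1)[OF lim Ez] unfolding eventually_sequentially by blast
    have "\<forall>\<^sub>F T in at_top. ereal (\<delta> * z - Cn n) \<le> ereal (V x T)"
      using eventually_ge_at_top[of "real N"]
    proof eventually_elim
      case (elim T)
      have T0: "0 \<le> T" using elim by (rule order.trans[rotated]) simp
      have "(\<integral>\<^sup>+\<omega>. min (hitting_time X (Bn n) \<omega>) (of_nat N) \<partial>M x) \<le> (\<integral>\<^sup>+\<omega>. min (hitting_time X (Bn n) \<omega>) (ennreal T) \<partial>M x)"
      proof (rule nn_integral_mono)
        fix \<omega>
        have "(of_nat N :: ennreal) \<le> ennreal T" using elim by (simp add: ennreal_of_nat_eq_real_of_nat ennreal_leI)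
        then show "min (hitting_time X (Bn n) \<omega>) (of_nat N) \<le> min (hitting_time X (Bn n) \<omega>) (ennreal T)"
          by (rule min.mono[OF order_refl])
      qed
      then have "ennreal z \<le> (\<integral>\<^sup>+\<omega>. min (hitting_time X (Bn n) \<omega>) (ennreal T) \<partial>M x)" using N by simp
      from VB2[OF T0 dl z0 this] show ?case by simp
    qed
    then show ?thesis unfolding qV by (intro le_Limsup) simp_all
  qed
  show ?thesis
  proof
    assume ql: "(q \<longlongrightarrow> \<infinity>) (at_infty_from x0)"
    show "\<forall>n::nat. ((\<lambda>x. \<integral>\<^sup>+\<omega>. hitting_time X {y. dist x0 y \<le> real n} \<omega> \<partial>M x) \<longlongrightarrow> \<infinity>) (at_infty_from x0)"
    proof
      fix n :: nat
      have "((\<lambda>x. E n x) \<longlongrightarrow> top) (at_infty_from x0)"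
        unfolding tendsto_top_iff_ennreal
      proof (intro allI impI)
        fix l :: real assume l0: "0 \<le> l"
        have "\<forall>\<^sub>F x in at_infty_from x0. ereal (2 * c * l + Cn n) < q x"
          using ql unfolding tendsto_PInfty by blast
        then show "\<forall>\<^sub>F x in at_infty_from x0. ennreal l < E n x"
        proof eventually_elim
          case (elim x)
          show ?case
          proof (rule ccontr)
            assume "\<not> ennreal l < E n x"
            then have "E n x \<le> ennreal l" by simp
            from U[OF l0 this] elim show False by simp
          qed
        qed
      qed
      then show "((\<lambda>x. \<integral>\<^sup>+\<omega>. hitting_time X {y. dist x0 y \<le> real n} \<omega> \<partial>M x) \<longlongrightarrow> \<infinity>) (at_infty_from x0)"
        by (simp add: E_def Bn_def)
    qed
  next
    assume El: "\<forall>n::nat. ((\<lambda>x. \<integral>\<^sup>+\<omega>. hitting_time X {y. dist x0 y \<le> real n} \<omega> \<partial>M x) \<longlongrightarrow> \<infinity>) (at_infty_from x0)"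
    have "bounded {x. f x \<le> (\<integral>y. f y \<partial>\<mu>) + \<delta>}" using L_compact by (rule compact_imp_bounded)
    then obtain e where e: "\<And>y. f y \<le> (\<integral>y. f y \<partial>\<mu>) + \<delta> \<Longrightarrow> dist x0 y \<le> e"
      unfolding bounded_any_center[where a=x0] by blast
    define n0 where "n0 = nat \<lceil>e\<rceil>"
    have dl: "\<delta> \<le> f y - (\<integral>y. f y \<partial>\<mu>)" if "y \<notin> Bn n0" for y
    proof (rule ccontr)
      assume "\<not> \<delta> \<le> f y - (\<integral>y. f y \<partial>\<mu>)"
      then have "dist x0 y \<le> e" by (intro e) simp
      then have "dist x0 y \<le> real n0" unfolding n0_def by linarith
      then show False using that by (simp add: Bn_def)
    qed
    have Et: "((\<lambda>x. E n0 x) \<longlongrightarrow> top) (at_infty_from x0)"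
      using El[rule_format, of n0] by (simp add: E_def Bn_def)
    show "(q \<longlongrightarrow> \<infinity>) (at_infty_from x0)"
      unfolding tendsto_PInfty
    proof
      fix r :: real
      define z where "z = max 0 (r + Cn n0 + 1) / \<delta>"
      have z0: "0 \<le> z" using \<delta>_pos by (simp add: z_def)
      have dz: "r < \<delta> * z - Cn n0" using \<delta>_pos by (simp add: z_def)
      have "\<forall>\<^sub>F x in at_infty_from x0. ennreal z < E n0 x"
        using Et unfolding tendsto_top_iff_ennreal using z0 by blast
      then show "\<forall>\<^sub>F x in at_infty_from x0. ereal r < q x"
      proof eventually_elim
        case (elim x)
        have "ereal r < ereal (\<delta> * z - Cn n0)" using dz by simp
        also have "\<dots> \<le> q x" by (rule Lo[OF dl z0 elim])
        finally show ?case .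
      qed
    qed
  qed
qed


end
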